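(* Let $\mathsf{X}$ and $\mathsf{Y}$ be intermediate temporal logics with $\mathsf{X}\subseteq\mathsf{Y}$. A temporal theory $\Gamma$ is $\mathsf{X}$-consistent if and only if it is $\mathsf{Y}$-consistent.
   Context: Fix a countable set $\mathbb{P}$ of atoms. Temporal formulas: $\varphi ::= p\mid\bot\mid\varphi\wedge\varphi\mid\varphi\vee\varphi\mid\varphi\to\varphi\mid\circ\varphi\mid\varphi\,\mathsf{U}\,\varphi\mid\varphi\,\mathsf{R}\,\varphi$; $\Box\varphi:=\bot\,\mathsf{R}\,\varphi$. An intuitionistic temporal frame is $(W,\preccurlyeq,S)$ with $W\ne\emptyset$, $\preccurlyeq$ a partial order, $S:W\to W$ forward confluent ($w\preccurlyeq v\Rightarrow S(w)\preccurlyeq S(v)$); persistent if also backward confluent (if $S(w)=v\preccurlyeq u$ then some $t\succcurlyeq w$ has $S(t)=u$). A model adds $V:W\to2^{\mathbb{P}}$ monotone along $\preccurlyeq$. Satisfaction: atoms via $V$; $\bot$ never; $\wedge,\vee$ pointwise; $M,w\models\varphi\to\psi$ iff for all $v\succcurlyeq w$, $M,v\models\varphi$ implies $M,v\models\psi$; $\circ\varphi$ at $w$ iff $\varphi$ at $S(w)$; $\varphi\,\mathsf{U}\,\psi$: some $k\ge0$ with $\psi$ at $S^k(w)$ and $\varphi$ at $S^i(w)$ for all $0\le i<k$; $\varphi\,\mathsf{R}\,\psi$: for all $k\ge0$, $\psi$ at $S^k(w)$ or $\varphi$ at some $S^i(w)$, $0\le i<k$. Depth $\le n$: no chain of $n+1$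 pairwise distinct $\preccurlyeq$-related worlds. $\mathrm{ITL}^{\mathrm{BD}_n}$: formulas true at every world of every model on a persistent frame of depth $\le n$; $\mathrm{LTL}:=\mathrm{ITL}^{\mathrm{BD}_1}$. An intermediate temporal logic is a set $\mathsf{X}$ with $\mathrm{ITL}^{\mathrm{BD}_n}\subseteq\mathsf{X}\subseteq\mathrm{LTL}$ for some $n\ge1$, closed under modus ponens, necessitation ($\psi\in\mathsf{X}\Rightarrow\circ\psi,\Box\psi\in\mathsf{X}$) and uniform substitution. $\mathsf{X}$-models are models on persistent frames of depth $\le n$ validating every formula of $\mathsf{X}$. $\Gamma$ is $\mathsf{X}$-consistent if some $\mathsf{X}$-model satisfies all of $\Gamma$ at some world. *)

theory Defs
  imports Main
begin

datatype fm =
    Atom nat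
  | Bot
  | And fm fm
  | Or fm fm
  | Imp fm fm
  | Next fm
  | Until fm fm
  | Release fm fm

definition Box :: "fm \<Rightarrow> fm" where
  "Box \<phi> = Release Bot \<phi>"

fun subst :: "(nat \<Rightarrow> fm) \<Rightarrow> fm \<Rightarrow> fm" where
  "subst \<sigma> (Atom p) = \<sigma> p"
| "subst \<sigma> Bot = Bot"
| "subst \<sigma> (And a b) = And (subst \<sigma> a) (subst \<sigma> b)"
| "subst \<sigma> (Or a b) = Or (subst \<sigma> a) (subst \<sigma> b)"
| "subst \<sigma> (Imp a b) = Imp (subst \<sigma> a) (subst \<sigma> b)"
| "subst \<sigma> (Next a) = Next (subst \<sigma> a)"
| "subst \<sigma> (Until a b) = Until (subst \<sigma> a) (subst \<sigma> b)"
| "subst \<sigma> (Release a b) = Release (subst \<sigma> a) (subst \<sigma> b)"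

record 'w kmodel =
  wor :: "'w set"
  leq :: "'w \<Rightarrow> 'w \<Rightarrow> bool"
  suc :: "'w \<Rightarrow> 'w"
  val :: "'w \<Rightarrow> nat set"

definition frame :: "'w kmodel \<Rightarrow> bool" where
  "frame M \<longleftrightarrow> wor M \<noteq> {}
     \<and> (\<forall>w\<in>wor M. suc M w \<in> wor M)
     \<and> (\<forall>w\<in>wor M. leq M w w)
     \<and> (\<forall>u\<in>wor M. \<forall>v\<in>wor M. \<forall>w\<in>wor M. leq M u v \<and> leq M v w \<longrightarrow> leq M u w)
     \<and> (\<forall>u\<in>wor M. \<forall>v\<in>wor M. leq M u v \<and> leq M v u \<longrightarrow> u = v)
     \<and> (\<forall>w\<in>wor M. \<forall>v\<in>wor M. leq M w v \<longrightarrow> leq M (suc M w) (suc M v))"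

definition persistent :: "'w kmodel \<Rightarrow> bool" where
  "persistent M \<longleftrightarrow> frame M
     \<and> (\<forall>w\<in>wor M. \<forall>u\<in>wor M. leq M (suc M w) u \<longrightarrow>
          (\<exists>t\<in>wor M. leq M w t \<and> suc M t = u))"

definition model :: "'w kmodel \<Rightarrow> bool" where
  "model M \<longleftrightarrow> frame M
     \<and> (\<forall>w\<in>wor M. \<forall>v\<in>wor M. leq M w v \<longrightarrow> val M w \<subseteq> val M v)"

definition depth_le :: "'w kmodel \<Rightarrow> nat \<Rightarrow> bool" where
  "depth_le M n \<longleftrightarrow> \<not> (\<exists>C. C \<subseteq> wor M \<and> finite C \<and> card C = Suc n
        \<and> (\<forall>x\<in>C. \<forall>y\<in>C. leq M x y \<or> leq M y x))"

fun sat :: "'w kmodel \<Rightarrow> 'w \<Rightarrow> fm \<Rightarrow> bool" where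
  "sat M w (Atom p) = (p \<in> val M w)"
| "sat M w Bot = False"
| "sat M w (And a b) = (sat M w a \<and> sat M w b)"
| "sat M w (Or a b) = (sat M w a \<or> sat M w b)"
| "sat M w (Imp a b) = (\<forall>v\<in>wor M. leq M w v \<longrightarrow> sat M v a \<longrightarrow> sat M v b)"
| "sat M w (Next a) = sat M (suc M w) a"
| "sat M w (Until a b) =
     (\<exists>k. sat M ((suc M ^^ k) w) b \<and> (\<forall>i<k. sat M ((suc M ^^ i) w) a))"
| "sat M w (Release a b) =
     (\<forall>k. sat M ((suc M ^^ k) w) b \<or> (\<exists>i<k. sat M ((suc M ^^ i) w) a))"

definition ITL_BD :: "'w itself \<Rightarrow> nat \<Rightarrow> fm set" where
  "ITL_BD T n = {\<phi>. \<forall>M :: 'w kmodel. model M \<and> persistent M \<and> depth_le M n \<longrightarrow>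
                      (\<forall>w\<in>wor M. sat M w \<phi>)}"

definition LTL :: "'w itself \<Rightarrow> fm set" where
  "LTL T = ITL_BD T 1"

definition intermediate_logic :: "'w itself \<Rightarrow> fm set \<Rightarrow> bool" where
  "intermediate_logic T X \<longleftrightarrow>
     (\<exists>n\<ge>1. ITL_BD T n \<subseteq> X) \<and> X \<subseteq> LTL T
     \<and> (\<forall>\<phi> \<psi>. Imp \<phi> \<psi> \<in> X \<longrightarrow> \<phi> \<in> X \<longrightarrow> \<psi> \<in> X)
     \<and> (\<forall>\<psi>\<in>X. Next \<psi> \<in> X \<and> Box \<psi> \<in> X)
     \<and> (\<forall>\<psi>\<in>X. \<forall>\<sigma>. subst \<sigma> \<psi> \<in> X)"

definition depth_of :: "'w itself \<Rightarrow> fm set \<Rightarrow> nat" where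
  "depth_of T X = (LEAST n. n \<ge> 1 \<and> ITL_BD T n \<subseteq> X)"

definition X_model :: "'w itself \<Rightarrow> fm set \<Rightarrow> 'w kmodel \<Rightarrow> bool" where
  "X_model T X M \<longleftrightarrow> model M \<and> persistent M \<and> depth_le M (depth_of T X)
     \<and> (\<forall>\<phi>\<in>X. \<forall>w\<in>wor M. sat M w \<phi>)"

definition consistent :: "'w itself \<Rightarrow> fm set \<Rightarrow> fm set \<Rightarrow> bool" where
  "consistent T X \<Gamma> \<longleftrightarrow>
     (\<exists>M :: 'w kmodel. \<exists>w\<in>wor M. X_model T X M \<and> (\<forall>\<phi>\<in>\<Gamma>. sat M w \<phi>))"

end

theory Submission
  imports Defs
begin

lemma suc_pow_wor:
  assumes "frame M" "w \<in> wor M"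
  shows "(suc M ^^ k) w \<in> wor M"
proof (induction k)
  case 0 then show ?case using assms(2) by simp
next
  case (Suc k)
  have "\<forall>w\<in>wor M. suc M w \<in> wor M" using assms(1) unfolding frame_def by blast
  then show ?case using Suc by simp
qed

lemma suc_pow_leq:
  assumes "frame M" "w \<in> wor M" "v \<in> wor M" "leq M w v"
  shows "leq M ((suc M ^^ k) w) ((suc M ^^ k) v)"
proof (induction k)
  case 0 then show ?case using assms(4) by simp
next
  case (Suc k)
  have fc: "\<forall>w\<in>wor M. \<forall>v\<in>wor M. leq M w v \<longrightarrow> leq M (suc M w) (suc M v)"
    using assms(1) unfolding frame_def by blast
  then show ?case using Suc suc_pow_wor[OF assms(1,2), of k] suc_pow_wor[OF assms(1,3), of k]
    by simp
qed


lemma fr_suc: "frame M \<Longrightarrow> w \<in> wor M \<Longrightarrow> suc M w \<in> wor M"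
  unfolding frame_def by blast
lemma fr_refl: "frame M \<Longrightarrow> w \<in> wor M \<Longrightarrow> leq M w w"
  unfolding frame_def by blast
lemma fr_trans: "frame M \<Longrightarrow> u \<in> wor M \<Longrightarrow> v \<in> wor M \<Longrightarrow> w \<in> wor M \<Longrightarrow> leq M u v \<Longrightarrow> leq M v w \<Longrightarrow> leq M u w"
  unfolding frame_def by blast
lemma fr_anti: "frame M \<Longrightarrow> u \<in> wor M \<Longrightarrow> v \<in> wor M \<Longrightarrow> leq M u v \<Longrightarrow> leq M v u \<Longrightarrow> u = v"
  unfolding frame_def by blast
lemma fr_fc: "frame M \<Longrightarrow> u \<in> wor M \<Longrightarrow> v \<in> wor M \<Longrightarrow> leq M u v \<Longrightarrow> leq M (suc M u) (suc M v)"
  unfolding frame_def by blast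
lemma model_frame: "model M \<Longrightarrow> frame M" by (simp add: model_def)
lemma model_val: "model M \<Longrightarrow> u \<in> wor M \<Longrightarrow> v \<in> wor M \<Longrightarrow> leq M u v \<Longrightarrow> val M u \<subseteq> val M v"
  by (simp add: model_def)

lemma sat_mono:
  assumes "model M" "w \<in> wor M" "v \<in> wor M" "leq M w v" "sat M w \<phi>"
  shows "sat M v \<phi>"
  using assms
proof (induction \<phi> arbitrary: w v)
  case (Atom p) then show ?case using model_val[of M w v] by auto
next
  case Bot then show ?case by simp
next
  case (And a b) then show ?case by simp
next
  case (Or a b) then show ?case by (metis sat.simps(4))
next
  case (Imp a b)
  have fr: "frame M" using Imp.prems by (simp add: model_def)
  show ?case unfolding sat.simps
  proof (intro ballI impI)
    fix u assume u: "u \<in> wor M" "leq M v u" "sat M u a"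
    have "leq M w u" using fr_trans[OF fr _ _ u(1)] Imp.prems u by blast
    then show "sat M u b" using Imp.prems(5) u by simp
  qed
next
  case (Next a)
  have fr: "frame M" using Next.prems by (simp add: model_def)
  show ?case using Next.IH[of "suc M w" "suc M v"] Next.prems fr_suc[OF fr] fr_fc[OF fr]
    by simp
next
  case (Until a b)
  have fr: "frame M" using Until.prems by (simp add: model_def)
  from Until.prems(5) obtain k where k: "sat M ((suc M ^^ k) w) b"
    "\<forall>i<k. sat M ((suc M ^^ i) w) a" by auto
  have "sat M ((suc M ^^ k) v) b"
    using Until.IH(2)[OF Until.prems(1) suc_pow_wor[OF fr Until.prems(2)] suc_pow_wor[OF fr Until.prems(3)]
       suc_pow_leq[OF fr Until.prems(2-4)] k(1)] .
  moreover have "\<forall>i<k. sat M ((suc M ^^ i) v) a"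
  proof (intro allI impI)
    fix i assume "i < k"
    then show "sat M ((suc M ^^ i) v) a"
      using Until.IH(1)[OF Until.prems(1) suc_pow_wor[OF fr Until.prems(2)] suc_pow_wor[OF fr Until.prems(3)]
       suc_pow_leq[OF fr Until.prems(2-4)]] k(2) by blast
  qed
  ultimately show ?case by auto
next
  case (Release a b)
  have fr: "frame M" using Release.prems by (simp add: model_def)
  show ?case unfolding sat.simps
  proof (intro allI)
    fix k
    from Release.prems(5) have "sat M ((suc M ^^ k) w) b \<or> (\<exists>i<k. sat M ((suc M ^^ i) w) a)" by simp
    then show "sat M ((suc M ^^ k) v) b \<or> (\<exists>i<k. sat M ((suc M ^^ i) v) a)"
    proof
      assume "sat M ((suc M ^^ k) w) b"
      then show ?thesis using Release.IH(2)[OF Release.prems(1) suc_pow_wor[OF fr Release.prems(2)] suc_pow_wor[OF fr Release.prems(3)]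
       suc_pow_leq[OF fr Release.prems(2-4)]] by blast
    next
      assume "\<exists>i<k. sat M ((suc M ^^ i) w) a"
      then obtain i where "i<k" "sat M ((suc M ^^ i) w) a" by blast
      then show ?thesis using Release.IH(1)[OF Release.prems(1) suc_pow_wor[OF fr Release.prems(2)] suc_pow_wor[OF fr Release.prems(3)]
       suc_pow_leq[OF fr Release.prems(2-4)]] by blast
    qed
  qed
qed


lemma sat_restrict:
  assumes "W \<subseteq> wor M"
    and up: "\<And>v u. v \<in> W \<Longrightarrow> u \<in> wor M \<Longrightarrow> leq M v u \<Longrightarrow> u \<in> W"
    and sc: "\<And>v. v \<in> W \<Longrightarrow> suc M v \<in> W"
    and "w \<in> W"
  shows "sat (M\<lparr>wor := W\<rparr>) w \<phi> = sat M w \<phi>"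
  using assms(4)
proof (induction \<phi> arbitrary: w)
  case (Atom p) then show ?case by simp
next
  case Bot then show ?case by simp
next
  case (And a b) then show ?case by simp
next
  case (Or a b) then show ?case by simp
next
  case (Imp a b)
  have "(\<forall>v\<in>W. leq M w v \<longrightarrow> sat M v a \<longrightarrow> sat M v b) = (\<forall>v\<in>wor M. leq M w v \<longrightarrow> sat M v a \<longrightarrow> sat M v b)"
    using assms(1) up[OF Imp.prems] by blast
  then show ?case using Imp.IH Imp.prems up by (simp cong: ball_cong)
next
  case (Next a) then show ?case using sc by simp
next
  case (Until a b)
  have "\<And>k. (suc M ^^ k) w \<in> W" using Until.prems sc by (induct_tac k) auto
  then show ?case using Until.IH by simp
next
  case (Release a b)
  have "\<And>k. (suc M ^^ k) w \<in> W" using Release.prems sc by (induct_tac k) auto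
  then show ?case using Release.IH by simp
qed

lemma depth1_mono:
  assumes "depth_le M 1" "n \<ge> 1"
  shows "depth_le M n"
  unfolding depth_le_def
proof
  assume "\<exists>C. C \<subseteq> wor M \<and> finite C \<and> card C = Suc n \<and> (\<forall>x\<in>C. \<forall>y\<in>C. leq M x y \<or> leq M y x)"
  then obtain C where C: "C \<subseteq> wor M" "finite C" "card C = Suc n"
    "\<forall>x\<in>C. \<forall>y\<in>C. leq M x y \<or> leq M y x" by blast
  have "1 < card C" using C(3) assms(2) by simp
  then obtain x y where xy: "x \<in> C" "y \<in> C" "x \<noteq> y"
    using C(2) by (metis One_nat_def card_le_Suc0_iff_eq not_le)
  have "{x,y} \<subseteq> wor M \<and> finite {x,y} \<and> card {x,y} = Suc 1
      \<and> (\<forall>a\<in>{x,y}. \<forall>b\<in>{x,y}. leq M a b \<or> leq M b a)"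
    using xy C by auto
  then show False using assms(1) unfolding depth_le_def by blast
qed


lemma exists_maximal:
  assumes fr: "frame M" and "depth_le M n" "w \<in> wor M"
  shows "\<exists>v\<in>wor M. leq M w v \<and> (\<forall>u\<in>wor M. leq M v u \<longrightarrow> u = v)"
proof (rule ccontr)
  assume "\<not> ?thesis"
  then have H: "\<forall>v\<in>wor M. leq M w v \<longrightarrow> (\<exists>u. u \<in> wor M \<and> leq M v u \<and> u \<noteq> v)" by blast
  define g where "g v = (SOME u. u \<in> wor M \<and> leq M v u \<and> u \<noteq> v)" for v
  define f where "f k = (g ^^ k) w" for k
  have P: "f k \<in> wor M \<and> leq M w (f k)" for k
  proof (induction k)
    case 0 then show ?case using assms(3) fr_refl[OF fr] by (simp add: f_def)
  next
    case (Suc k)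
    have e: "\<exists>u. u \<in> wor M \<and> leq M (f k) u \<and> u \<noteq> f k" using H Suc by blast
    have "f (Suc k) = g (f k)" by (simp add: f_def)
    then have h: "f (Suc k) \<in> wor M \<and> leq M (f k) (f (Suc k))"
      using someI_ex[OF e] by (simp add: g_def)
    then show ?case using Suc fr_trans[OF fr, of w "f k" "f (Suc k)"] assms(3) by simp
  qed
  have S: "leq M (f k) (f (Suc k)) \<and> f (Suc k) \<noteq> f k" for k
  proof -
    have e: "\<exists>u. u \<in> wor M \<and> leq M (f k) u \<and> u \<noteq> f k" using H P by blast
    have "f (Suc k) = g (f k)" by (simp add: f_def)
    then show ?thesis using someI_ex[OF e] by (simp add: g_def)
  qed
  have L: "i \<le> j \<Longrightarrow> leq M (f i) (f j)" for i j
  proof (induction j rule: dec_induct)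
    case base then show ?case using P fr_refl[OF fr] by simp
  next
    case (step j) then show ?case using S[of j] P fr_trans[OF fr, of "f i" "f j" "f (Suc j)"] by simp
  qed
  have inj: "inj_on f {..n}"
  proof (rule inj_onI)
    fix i j assume "i \<in> {..n}" "j \<in> {..n}" "f i = f j"
    show "i = j"
    proof (rule ccontr)
      assume "i \<noteq> j"
      then consider "i < j" | "j < i" by linarith
      then show False
      proof cases
        case 1
        have "leq M (f (Suc i)) (f i)" using L[of "Suc i" j] 1 \<open>f i = f j\<close> by simp
        then show False using S[of i] P fr_anti[OF fr, of "f i" "f (Suc i)"] by simp
      next
        case 2
        have "leq M (f (Suc j)) (f j)" using L[of "Suc j" i] 2 \<open>f i = f j\<close> by simp
        then show False using S[of j] P fr_anti[OF fr, of "f j" "f (Suc j)"] by simp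
      qed
    qed
  qed
  have c1: "f ` {..n} \<subseteq> wor M" using P by blast
  have c2: "card (f ` {..n}) = Suc n" using card_image[OF inj] by simp
  have c3: "\<forall>x\<in>f ` {..n}. \<forall>y\<in>f ` {..n}. leq M x y \<or> leq M y x"
  proof (intro ballI)
    fix x y assume "x \<in> f ` {..n}" "y \<in> f ` {..n}"
    then obtain i j where "x = f i" "y = f j" by blast
    then show "leq M x y \<or> leq M y x" using L[of i j] L[of j i] by (cases "i \<le> j") auto
  qed
  have "f ` {..n} \<subseteq> wor M \<and> finite (f ` {..n}) \<and> card (f ` {..n}) = Suc n
     \<and> (\<forall>x\<in>f ` {..n}. \<forall>y\<in>f ` {..n}. leq M x y \<or> leq M y x)"
    using c1 c2 c3 by blast
  then show False using assms(2) unfolding depth_le_def by blast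
qed


lemma consistent_iff:
  fixes T :: "'w itself"
  assumes "intermediate_logic T X"
  shows "consistent T X \<Gamma> \<longleftrightarrow>
    (\<exists>M :: 'w kmodel. \<exists>w\<in>wor M. model M \<and> persistent M \<and> depth_le M 1 \<and> (\<forall>\<phi>\<in>\<Gamma>. sat M w \<phi>))"
proof
  assume "consistent T X \<Gamma>"
  then obtain M :: "'w kmodel" and w where w: "w \<in> wor M" and XM: "X_model T X M"
    and G: "\<forall>\<phi>\<in>\<Gamma>. sat M w \<phi>" unfolding consistent_def by blast
  have m: "model M" "persistent M" "depth_le M (depth_of T X)" using XM by (auto simp: X_model_def)
  have fr: "frame M" using m by (simp add: model_def)
  have bc: "\<And>x u. x \<in> wor M \<Longrightarrow> u \<in> wor M \<Longrightarrow> leq M (suc M x) u \<Longrightarrow> \<exists>t\<in>wor M. leq M x t \<and> suc M t = u"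
    using m(2) unfolding persistent_def by blast
  obtain v where v: "v \<in> wor M" "leq M w v" "\<forall>u\<in>wor M. leq M v u \<longrightarrow> u = v"
    using exists_maximal[OF fr m(3) w] by blast
  define W where "W = {v\<in>wor M. \<forall>u\<in>wor M. leq M v u \<longrightarrow> u = v}"
  have Wsub: "W \<subseteq> wor M" by (auto simp: W_def)
  have up: "\<And>x u. x \<in> W \<Longrightarrow> u \<in> wor M \<Longrightarrow> leq M x u \<Longrightarrow> u \<in> W"
    unfolding W_def by blast
  have sc: "suc M x \<in> W" if "x \<in> W" for x
  proof -
    have x: "x \<in> wor M" "\<forall>u\<in>wor M. leq M x u \<longrightarrow> u = x" using that by (auto simp: W_def)
    have "suc M x \<in> wor M" using fr_suc[OF fr x(1)] .
    moreover have "\<forall>u\<in>wor M. leq M (suc M x) u \<longrightarrow> u = suc M x"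
    proof (intro ballI impI)
      fix u assume "u \<in> wor M" "leq M (suc M x) u"
      then obtain t where "t \<in> wor M" "leq M x t" "suc M t = u"
        using bc x by blast
      then show "u = suc M x" using x by auto
    qed
    ultimately show ?thesis by (simp add: W_def)
  qed
  have vW: "v \<in> W" using v by (simp add: W_def)
  define M' where "M' = M\<lparr>wor := W\<rparr>"
  have eqs: "wor M' = W" "leq M' = leq M" "suc M' = suc M" "val M' = val M"
    by (simp_all add: M'_def)
  have fr': "frame M'"
    unfolding frame_def eqs
  proof (intro conjI ballI impI)
    show "W \<noteq> {}" using vW by blast
  next
    fix x assume "x \<in> W" then show "suc M x \<in> W" by (rule sc)
  next
    fix x assume "x \<in> W" then show "leq M x x" using Wsub fr_refl[OF fr] by blast
  next
    fix x y z assume "x \<in> W" "y \<in> W" "z \<in> W" "leq M x y \<and> leq M y z"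
    then show "leq M x z" using Wsub fr_trans[OF fr, of x y z] by blast
  next
    fix x y assume "x \<in> W" "y \<in> W" "leq M x y \<and> leq M y x"
    then show "x = y" using Wsub fr_anti[OF fr, of x y] by blast
  next
    fix x y assume "x \<in> W" "y \<in> W" "leq M x y"
    then show "leq M (suc M x) (suc M y)" using Wsub fr_fc[OF fr, of x y] by blast
  qed
  have mod': "model M'"
    unfolding model_def
  proof (intro conjI ballI impI)
    show "frame M'" by fact
  next
    fix x y assume "x \<in> wor M'" "y \<in> wor M'" "leq M' x y"
    then show "val M' x \<subseteq> val M' y" using Wsub model_val[OF m(1), of x y] by (auto simp: M'_def)
  qed
  have per': "persistent M'"
    unfolding persistent_def
  proof (intro conjI ballI impI)
    show "frame M'" by fact
  next
    fix x u assume xu: "x \<in> wor M'" "u \<in> wor M'" "leq M' (suc M' x) u"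
    have xW: "x \<in> W" using xu by (simp add: M'_def)
    have "suc M x \<in> W" using sc[OF xW] .
    then have "u = suc M x" using xu unfolding M'_def W_def by auto
    then show "\<exists>t\<in>wor M'. leq M' x t \<and> suc M' t = u"
      using xW Wsub fr_refl[OF fr, of x] by (auto simp: M'_def)
  qed
  have d1: "depth_le M' 1"
    unfolding depth_le_def
  proof
    assume "\<exists>C. C \<subseteq> wor M' \<and> finite C \<and> card C = Suc 1 \<and> (\<forall>x\<in>C. \<forall>y\<in>C. leq M' x y \<or> leq M' y x)"
    then obtain C where C: "C \<subseteq> W" "finite C" "card C = 2"
      "\<forall>x\<in>C. \<forall>y\<in>C. leq M x y \<or> leq M y x" by (auto simp: M'_def)
    then obtain x y where xy: "C = {x,y}" "x \<noteq> y" by (meson card_2_iff)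
    then have "x \<in> W" "y \<in> W" "leq M x y \<or> leq M y x" using C by auto
    then show False using xy(2) unfolding W_def by blast
  qed
  have "\<forall>\<phi>\<in>\<Gamma>. sat M' v \<phi>"
    using G sat_mono[OF m(1) w v(1) v(2)] sat_restrict[OF Wsub up sc vW] by (simp add: M'_def)
  moreover have "v \<in> wor M'" using vW by (simp add: M'_def)
  ultimately show "\<exists>M :: 'w kmodel. \<exists>w\<in>wor M. model M \<and> persistent M \<and> depth_le M 1 \<and> (\<forall>\<phi>\<in>\<Gamma>. sat M w \<phi>)"
    using mod' per' d1 by blast
next
  assume "\<exists>M :: 'w kmodel. \<exists>w\<in>wor M. model M \<and> persistent M \<and> depth_le M 1 \<and> (\<forall>\<phi>\<in>\<Gamma>. sat M w \<phi>)"
  then obtain M :: "'w kmodel" and w where M: "w \<in> wor M" "model M" "persistent M" "depth_le M 1"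
    "\<forall>\<phi>\<in>\<Gamma>. sat M w \<phi>" by blast
  obtain n where n: "n \<ge> 1" "ITL_BD T n \<subseteq> X" using assms unfolding intermediate_logic_def by blast
  have "depth_of T X \<ge> 1" unfolding depth_of_def
    by (rule LeastI2_wellorder[where P="\<lambda>n. n \<ge> 1 \<and> ITL_BD T n \<subseteq> X" and a=n]) (use n in auto)
  then have d: "depth_le M (depth_of T X)" using depth1_mono M(4) by blast
  have "X \<subseteq> ITL_BD T 1" using assms unfolding intermediate_logic_def LTL_def by blast
  then have "\<forall>\<phi>\<in>X. \<forall>w\<in>wor M. sat M w \<phi>" using M unfolding ITL_BD_def by blast
  then have "X_model T X M" using M d by (simp add: X_model_def)
  then show "consistent T X \<Gamma>" using M unfolding consistent_def by blast
qed

theorem proposition4p9: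
  fixes T :: "'w itself" and X Y \<Gamma> :: "fm set"
  assumes "intermediate_logic T X" and "intermediate_logic T Y" and "X \<subseteq> Y"
  shows "consistent T X \<Gamma> \<longleftrightarrow> consistent T Y \<Gamma>"
  using consistent_iff[OF assms(1)] consistent_iff[OF assms(2)] by simp

end
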